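(* For a veering triangulation $\tau$ of $M$, there is a surjective $\mathbb{Z}[G]$-module homomorphism $\mathcal{E}(\tilde\tau)\to\mathcal{E}^\triangle(\tilde\tau)$ (induced by the identity on the free module on edges of $\tilde\tau$), and consequently $\Theta_\tau$ divides $V_\tau$ in $\mathbb{Z}[G]$.
   Context: $\tau$ is a veering triangulation of $M$ (taut ideal triangulation with cooriented faces, each tetrahedron having two bottom and two top faces, a bottom edge, a top edge and four side edges, angle sum $2\pi$ around edges, with a consistent right/left veer on edges modelled on a thickened rhombus whose side edges of positive slope are right-veering and of negative slope left-veering). $E$, $F$ denote the sets of edges and faces of $\tau$. $G=H_1(M;\mathbb{Z})/\mathrm{torsion}$, $\hat M$ the corresponding (universal free abelian) cover with deck group $G$, $\tilde\tau$ the lifted triangulation. Tetrahedron relation of a tetrahedron with bottom edge $\mathbf b$, top edge $\mathbf t$: $\mathbf b=\mathbf t+\mathbf s_1+\mathbf s_2$ where $\mathbf s_1,\mathbf s_2$ are the side edges of veer opposite to $\mathbf t$. Face relation of a face $f$: $\mathbf b=\mathbf x+\mathbf y$ where $\mathbf b$ is the bottom edge of the unique tetrahedron having $f$ as a bottom face and $\mathbf x,\mathbf y$ are the other edges of $f$. The edge module $\mathcal{E}(\tilde\tau)$ is the free $\mathbb{Z}$-module on edges of $\tilde\tau$ modulo the tetrahedron relations of all tetrahedra of $\tilde\tau$; choosing lifts of edges it is the cokernel of $L:\mathbb{Z}[G]^E\to\mathbb{Z}[G]^E$ sending each edge $\mathbf b$ to $\mathbf b-(\mathbf t+\mathbf s_1+\mathbf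 s_2)$ for the tetrahedron above it, and the veering polynomial is $V_\tau=\det L\in\mathbb{Z}[G]$. The face module $\mathcal{E}^\triangle(\tilde\tau)$ is the free module on edges of $\tilde\tau$ modulo all face relations, i.e. the cokernel of $L^\triangle:\mathbb{Z}[G]^F\to\mathbb{Z}[G]^E$, $f\mapsto \mathbf b-(\mathbf x+\mathbf y)$; the taut polynomial $\Theta_\tau$ is the gcd of the $|E|\times|E|$ minors of $L^\triangle$, defined up to a unit $\pm g$. *)

theory Defs
  imports "HOL-Analysis.Analysis" "HOL-Library.Poly_Mapping"
begin

text \<open>Vertices are 0,1,2,3; a local edge is a
  two-element subset of the vertices; a local face is indexed by its opposite vertex.
  The taut labelling is fixed: bottom edge {0,2}, top edge {1,3}; the bottom faces are
  those opposite 1 and 3 (they contain the bottom edge), the top faces those opposite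
  0 and 2.  In the rhombus picture (viewed from above, vertices 0,1,2,3 in cyclic order)
  the sides {0,1},{2,3} have positive slope and {1,2},{0,3} negative slope.\<close>

definition verts :: "nat set" where "verts = {0,1,2,3}"
definition bot_edge :: "nat set" where "bot_edge = {0,2}"
definition top_edge :: "nat set" where "top_edge = {1,3}"
definition top_faces :: "nat set" where "top_faces = {0,2}"
definition bot_faces :: "nat set" where "bot_faces = {1,3}"
definition pos_sides :: "nat set set" where "pos_sides = {{0,1},{2,3}}"
definition neg_sides :: "nat set set" where "neg_sides = {{1,2},{0,3}}"

definition face_edges :: "nat \<Rightarrow> nat set set" where
  "face_edges k = {{i,j} | i j. i \<in> verts - {k} \<and> j \<in> verts - {k} \<and> i \<noteq> j}"

definition ord4 :: "nat \<Rightarrow> nat \<Rightarrow> nat \<Rightarrow> nat \<Rightarrow> nat \<Rightarrow> nat" where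
  "ord4 i j k l = (\<lambda>n. if n = 0 then i else if n = 1 then j else if n = 2 then k
                        else if n = 3 then l else n)"

text \<open>For a tetrahedron T and a top face k \<in> {0,2},
  tri_up T k is the tetrahedron glued above that face and tri_gl T k the gluing, a
  permutation of {0,1,2,3} sending k to the index of the corresponding bottom face of
  tri_up T k and the vertices of the face to the vertices they are glued to.
  tri_fc T k is the face of the triangulation that is the local face k of T,
  tri_ed T a the edge of the triangulation that is the local edge a of T, and
  tri_veer e = True iff the edge e is right-veering.\<close>

record ('t, 'f, 'e) tri =
  tri_up :: "'t \<Rightarrow> nat \<Rightarrow> 't"
  tri_gl :: "'t \<Rightarrow> nat \<Rightarrow> nat \<Rightarrow> nat"
  tri_fc :: "'t \<Rightarrow> nat \<Rightarrow> 'f"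
  tri_ed :: "'t \<Rightarrow> nat set \<Rightarrow> 'e"
  tri_veer :: "'e \<Rightarrow> bool"

definition oedges :: "('t \<times> nat \<times> nat) set" where
  "oedges = {(T, i, j). i \<in> verts \<and> j \<in> verts \<and> i \<noteq> j}"

definition ostep :: "('t, 'f, 'e, 'z) tri_scheme \<Rightarrow> (('t \<times> nat \<times> nat) \<times> ('t \<times> nat \<times> nat)) set" where
  "ostep \<tau> = {((T, i, j), (tri_up \<tau> T k, tri_gl \<tau> T k i, tri_gl \<tau> T k j)) | T i j k.
                 k \<in> top_faces \<and> i \<in> verts - {k} \<and> j \<in> verts - {k} \<and> i \<noteq> j}"

definition oequiv :: "('t, 'f, 'e, 'z) tri_scheme \<Rightarrow> (('t \<times> nat \<times> nat) \<times> ('t \<times> nat \<times> nat)) set" where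
  "oequiv \<tau> = (ostep \<tau> \<union> (ostep \<tau>)\<inverse>)\<^sup>*"

definition tstep :: "('t, 'f, 'e, 'z) tri_scheme \<Rightarrow> ('t \<times> 't) set" where
  "tstep \<tau> = {(T, tri_up \<tau> T k) | T k. k \<in> top_faces}"

text \<open>Gluings are odd permutations, i.e. orientation reversing for the coherently oriented
  labellings, so M is oriented; faces are glued top-to-bottom (coorientation); tri_fc and
  tri_ed identify faces and edges exactly as the gluings do; no edge is glued to itself
  with reversed orientation (so M is a manifold); the taut angle sum around every edge is
  2 pi (angle pi at the top and bottom edge of a tetrahedron, 0 at the sides); the veer is
  as in the rhombus model.\<close>

definition veering_triangulation :: "('t::finite, 'f::finite, 'e::finite, 'z) tri_scheme \<Rightarrow> bool" where
  "veering_triangulation \<tau> \<longleftrightarrow>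
     (\<forall>T. \<forall>k \<in> top_faces. tri_gl \<tau> T k permutes verts \<and> \<not> evenperm (tri_gl \<tau> T k)
          \<and> tri_gl \<tau> T k k \<in> bot_faces
          \<and> tri_fc \<tau> T k = tri_fc \<tau> (tri_up \<tau> T k) (tri_gl \<tau> T k k))
   \<and> bij_betw (\<lambda>(T, k). tri_fc \<tau> T k) (UNIV \<times> top_faces) UNIV
   \<and> bij_betw (\<lambda>(T, k). tri_fc \<tau> T k) (UNIV \<times> bot_faces) UNIV
   \<and> (\<forall>e. \<exists>T i j. i \<in> verts \<and> j \<in> verts \<and> i \<noteq> j \<and> tri_ed \<tau> T {i, j} = e)
   \<and> (\<forall>x \<in> oedges. \<forall>y \<in> oedges.
        (case (x, y) of ((T, i, j), (T', i', j')) \<Rightarrow>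
           tri_ed \<tau> T {i, j} = tri_ed \<tau> T' {i', j'} \<longleftrightarrow>
           ((T, i, j), (T', i', j')) \<in> oequiv \<tau> \<or> ((T, i, j), (T', j', i')) \<in> oequiv \<tau>))
   \<and> (\<forall>(T, i, j) \<in> oedges. ((T, i, j), (T, j, i)) \<notin> oequiv \<tau>)
   \<and> ((tstep \<tau> \<union> (tstep \<tau>)\<inverse>)\<^sup>* = UNIV)
   \<and> (\<forall>e. card {(T, a). a \<in> {bot_edge, top_edge} \<and> tri_ed \<tau> T a = e} = 2)
   \<and> (\<forall>T. (\<forall>a \<in> pos_sides. tri_veer \<tau> (tri_ed \<tau> T a)) \<and>
          (\<forall>a \<in> neg_sides. \<not> tri_veer \<tau> (tri_ed \<tau> T a)))"

text \<open>M deformation retracts onto the dual 2-complex: one vertex per tetrahedron, one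
  1-cell per face f (oriented along the coorientation, from the tetrahedron below f to the
  one above), one 2-cell per edge.  1-chains are functions 'f => int.\<close>

definition chain_bd :: "('t, 'f, 'e, 'z) tri_scheme \<Rightarrow> ('f \<Rightarrow> int) \<Rightarrow> 't \<Rightarrow> int" where
  "chain_bd \<tau> c T = (\<Sum>k \<in> bot_faces. c (tri_fc \<tau> T k)) - (\<Sum>k \<in> top_faces. c (tri_fc \<tau> T k))"

definition is_cycle :: "('t, 'f, 'e, 'z) tri_scheme \<Rightarrow> ('f \<Rightarrow> int) \<Rightarrow> bool" where
  "is_cycle \<tau> c \<longleftrightarrow> (\<forall>T. chain_bd \<tau> c T = 0)"

text \<open>For an oriented local edge (i,j) the loop around it passes through the tetrahedron
  entering through the face opposite the vertex k with (i,j,k,l) an even ordering.\<close>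
definition enter_vertex :: "nat \<Rightarrow> nat \<Rightarrow> nat" where
  "enter_vertex i j = (THE k. k \<in> verts - {i, j} \<and> evenperm (ord4 i j k (6 - i - j - k)))"

definition enter_term :: "('t, 'f, 'e, 'z) tri_scheme \<Rightarrow> 't \<times> nat \<times> nat \<Rightarrow> 'f \<Rightarrow> int" where
  "enter_term \<tau> x f = (case x of (T, i, j) \<Rightarrow>
      (if tri_fc \<tau> T (enter_vertex i j) = f
       then (if enter_vertex i j \<in> bot_faces then 1 else -1) else 0))"

text \<open>boundary of the 2-cell dual to the (oriented) edge through the oriented local edge x\<close>
definition cell_bd :: "('t::finite, 'f, 'e, 'z) tri_scheme \<Rightarrow> 't \<times> nat \<times> nat \<Rightarrow> 'f \<Rightarrow> int" where
  "cell_bd \<tau> x f = (\<Sum>y \<in> {y \<in> oedges. (x, y) \<in> oequiv \<tau>}. enter_term \<tau> y f)"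

definition is_boundary :: "('t::finite, 'f, 'e, 'z) tri_scheme \<Rightarrow> ('f \<Rightarrow> int) \<Rightarrow> bool" where
  "is_boundary \<tau> c \<longleftrightarrow> (\<exists>a :: 't \<times> nat \<times> nat \<Rightarrow> int. \<forall>f. c f = (\<Sum>x \<in> oedges. a x * cell_bd \<tau> x f))"

definition zsmul :: "int \<Rightarrow> 'g::ab_group_add \<Rightarrow> 'g" where
  "zsmul n g = (if 0 \<le> n then (\<Sum>_ \<in> {..<nat n}. g) else - (\<Sum>_ \<in> {..<nat (- n)}. g))"

definition eval_chain :: "('f::finite \<Rightarrow> 'g::ab_group_add) \<Rightarrow> ('f \<Rightarrow> int) \<Rightarrow> 'g" where
  "eval_chain \<phi> c = (\<Sum>f \<in> UNIV. zsmul (c f) (\<phi> f))"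

text \<open>The universal free abelian cover: \<phi> assigns to each dual 1-cell (face) its deck
  translation, relative to a choice of lifts of the tetrahedra.  The induced map
  H_1(M) \<rightarrow> G is surjective with kernel exactly the torsion, i.e. G = H_1(M;Z)/torsion.\<close>
definition univ_free_abelian_cover ::
  "('t::finite, 'f::finite, 'e, 'z) tri_scheme \<Rightarrow> ('f \<Rightarrow> 'g::ab_group_add) \<Rightarrow> bool" where
  "univ_free_abelian_cover \<tau> \<phi> \<longleftrightarrow>
     (\<forall>g. \<exists>c. is_cycle \<tau> c \<and> eval_chain \<phi> c = g)
   \<and> (\<forall>c. is_cycle \<tau> c \<longrightarrow>
         (eval_chain \<phi> c = 0 \<longleftrightarrow> (\<exists>n::int. n > 0 \<and> is_boundary \<tau> (\<lambda>f. n * c f))))"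

text \<open>A choice of lifts of the edges: the local edge a of the chosen lift of T is the
  translate by lift_pos T a of the chosen lift of the edge tri_ed T a.  Consistency with
  the gluing of the chosen lift of T along its top face k to the \<phi>-translate of the chosen
  lift of the tetrahedron above.\<close>
definition edge_lifts ::
  "('t, 'f, 'e, 'z) tri_scheme \<Rightarrow> ('f \<Rightarrow> 'g::ab_group_add) \<Rightarrow> ('t \<Rightarrow> nat set \<Rightarrow> 'g) \<Rightarrow> bool" where
  "edge_lifts \<tau> \<phi> p \<longleftrightarrow>
     (\<forall>T. \<forall>k \<in> top_faces. \<forall>i \<in> verts - {k}. \<forall>j \<in> verts - {k}. i \<noteq> j \<longrightarrow>
        p T {i, j} = \<phi> (tri_fc \<tau> T k) + p (tri_up \<tau> T k) {tri_gl \<tau> T k i, tri_gl \<tau> T k j})"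

type_synonym 'g zgroupring = "'g \<Rightarrow>\<^sub>0 int"

definition mon :: "'g::ab_group_add \<Rightarrow> 'g zgroupring" where
  "mon g = Poly_Mapping.single g 1"

definition tet_above :: "('t, 'f, 'e, 'z) tri_scheme \<Rightarrow> 'e \<Rightarrow> 't" where
  "tet_above \<tau> e = (THE T. tri_ed \<tau> T bot_edge = e)"

definition opp_sides :: "('t, 'f, 'e, 'z) tri_scheme \<Rightarrow> 't \<Rightarrow> nat set set" where
  "opp_sides \<tau> T = (if tri_veer \<tau> (tri_ed \<tau> T top_edge) then neg_sides else pos_sides)"

text \<open>relation b - \<Sum> (translates of the other edges) of the chosen lift of T, normalised
  so that b has coefficient 1 (over the local edges in A)\<close>
definition rel_vec ::
  "('t, 'f, 'e, 'z) tri_scheme \<Rightarrow> ('t \<Rightarrow> nat set \<Rightarrow> 'g::ab_group_add) \<Rightarrow> 't \<Rightarrow> nat set set \<Rightarrow> 'e \<Rightarrow> 'g zgroupring" where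
  "rel_vec \<tau> p T A d =
     (if tri_ed \<tau> T bot_edge = d then 1 else 0)
     - (\<Sum>a \<in> A. if tri_ed \<tau> T a = d then mon (p T a - p T bot_edge) else 0)"

text \<open>L : Z[G]^E \<rightarrow> Z[G]^E, entry (d, e) = coefficient of d in the image of e\<close>
definition Lmat ::
  "('t, 'f, 'e, 'z) tri_scheme \<Rightarrow> ('t \<Rightarrow> nat set \<Rightarrow> 'g::ab_group_add) \<Rightarrow> 'e \<Rightarrow> 'e \<Rightarrow> 'g zgroupring" where
  "Lmat \<tau> p d e = rel_vec \<tau> p (tet_above \<tau> e) ({top_edge} \<union> opp_sides \<tau> (tet_above \<tau> e)) d"

definition face_above :: "('t, 'f, 'e, 'z) tri_scheme \<Rightarrow> 'f \<Rightarrow> 't \<times> nat" where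
  "face_above \<tau> f = (THE (T, k). k \<in> bot_faces \<and> tri_fc \<tau> T k = f)"

definition LFmat ::
  "('t, 'f, 'e, 'z) tri_scheme \<Rightarrow> ('t \<Rightarrow> nat set \<Rightarrow> 'g::ab_group_add) \<Rightarrow> 'e \<Rightarrow> 'f \<Rightarrow> 'g zgroupring" where
  "LFmat \<tau> p d f = (case face_above \<tau> f of (T, k) \<Rightarrow>
       rel_vec \<tau> p T (face_edges k - {bot_edge}) d)"

definition col_module :: "('e \<Rightarrow> 'c::finite \<Rightarrow> 'r::comm_ring_1) \<Rightarrow> ('e \<Rightarrow> 'r) set" where
  "col_module A = {v. \<exists>x :: 'c \<Rightarrow> 'r. v = (\<lambda>d. \<Sum>c \<in> UNIV. A d c * x c)}"

definition veering_poly ::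
  "('t, 'f, 'e::finite, 'z) tri_scheme \<Rightarrow> ('t \<Rightarrow> nat set \<Rightarrow> 'g::ab_group_add) \<Rightarrow> 'g zgroupring" where
  "veering_poly \<tau> p = det (\<chi> d e. Lmat \<tau> p d e)"

text \<open>the |E| x |E| minors of L^triangle (up to sign: columns selected by an injection)\<close>
definition face_minors ::
  "('t, 'f, 'e::finite, 'z) tri_scheme \<Rightarrow> ('t \<Rightarrow> nat set \<Rightarrow> 'g::ab_group_add) \<Rightarrow> 'g zgroupring set" where
  "face_minors \<tau> p = {det (\<chi> d e. LFmat \<tau> p d (\<sigma> e)) | \<sigma> :: 'e \<Rightarrow> 'f. inj \<sigma>}"

definition is_gcd_of :: "'r::comm_ring_1 \<Rightarrow> 'r set \<Rightarrow> bool" where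
  "is_gcd_of g S \<longleftrightarrow> (\<forall>m \<in> S. g dvd m) \<and> (\<forall>h. (\<forall>m \<in> S. h dvd m) \<longrightarrow> h dvd g)"

end

theory Submission
  imports Defs
begin



lemma det_linear_rows_sum_lemma_gen:
  fixes S :: "'k set" and k0 :: 'k
  assumes fS: "finite S"
    and fT: "finite T"
  shows "det ((\<chi> i. if i \<in> T then sum (a i) S else c i):: 'a::comm_ring_1^'n^'n) =
    sum (\<lambda>f. det((\<chi> i. if i \<in> T then a i (f i) else c i)::'a^'n^'n))
      {f. (\<forall>i \<in> T. f i \<in> S) \<and> (\<forall>i. i \<notin> T \<longrightarrow> f i = k0)}"
  using fT
proof (induct T arbitrary: a c set: finite)
  case empty
  have th0: "\<And>x y. (\<chi> i. if i \<in> {} then x i else y i) = (\<chi> i. y i)"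
    by vector
  have E: "{f. (\<forall>i \<in> {}. f i \<in> S) \<and> (\<forall>i. i \<notin> {} \<longrightarrow> f i = k0)} = {\<lambda>_. k0}"
    by auto
  show ?case
    unfolding th0 E by simp
next
  case (insert z T a c)
  let ?F = "\<lambda>T. {f. (\<forall>i \<in> T. f i \<in> S) \<and> (\<forall>i. i \<notin> T \<longrightarrow> f i = k0)}"
  let ?h = "\<lambda>(y,g) i. if i = z then y else g i"
  let ?k = "\<lambda>h. (h(z),(\<lambda>i. if i = z then k0 else h i))"
  have thif: "\<And>a b c d. (if a \<or> b then c else d) = (if a then c else if b then c else d)"
    by simp
  have thif2: "\<And>a b c d e. (if a then b else if c then d else e) =
     (if c then (if a then b else d) else (if a then b else e))"
    by simp
  from \<open>z \<notin> T\<close> have nz: "\<And>i. i \<in> T \<Longrightarrow> i \<noteq> z"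
    by auto
  have "det (\<chi> i. if i \<in> insert z T then sum (a i) S else c i) =
    det (\<chi> i. if i = z then sum (a i) S else if i \<in> T then sum (a i) S else c i)"
    unfolding insert_iff thif ..
  also have "\<dots> = (\<Sum>j\<in>S. det (\<chi> i. if i \<in> T then sum (a i) S else if i = z then a i j else c i))"
    unfolding det_linear_row_sum[OF fS]
    by (subst thif2) (simp add: nz cong: if_cong)
  finally have tha:
    "det (\<chi> i. if i \<in> insert z T then sum (a i) S else c i) =
     (\<Sum>(j, f)\<in>S \<times> ?F T. det (\<chi> i. if i \<in> T then a i (f i)
                                else if i = z then a i j
                                else c i))"
    unfolding insert.hyps unfolding sum.cartesian_product by blast
  show ?case unfolding tha
    using \<open>z \<notin> T\<close>
    by (intro sum.reindex_bij_witness[where i="?k" and j="?h"])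
       (auto intro!: cong[OF refl[of det]] simp: vec_eq_iff)
qed

lemma det_linear_rows_sum_gen:
  fixes S :: "'k set"
  assumes fS: "finite S"
  shows "det (\<chi> i. sum (a i) S) =
    sum (\<lambda>f. det (\<chi> i. a i (f i) :: 'a::comm_ring_1 ^ 'n::finite^'n)) {f. \<forall>i. f i \<in> S}"
proof -
  have th0: "\<And>x y. ((\<chi> i. if i \<in> (UNIV:: 'n set) then x i else y i) :: 'a^'n^'n) = (\<chi> i. x i)"
    by vector
  from det_linear_rows_sum_lemma_gen[OF fS, of "UNIV :: 'n set" a, unfolded th0, OF finite]
  show ?thesis by simp
qed

lemma det_part:
  fixes LF :: "'e::finite \<Rightarrow> 'f::finite \<Rightarrow> 'r::comm_ring_1" and X :: "'f \<Rightarrow> 'e \<Rightarrow> 'r"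
  assumes H: "\<And>\<sigma>::'e\<Rightarrow>'f. inj \<sigma> \<Longrightarrow> h dvd det (\<chi> d e. LF d (\<sigma> e))"
  shows "h dvd det (\<chi> d e. \<Sum>f\<in>UNIV. LF d f * X f e)"
proof -
  let ?C = "\<lambda>f. (\<chi> d. LF d f) :: 'r^'e"
  have eq: "transpose (\<chi> d e. \<Sum>f\<in>UNIV. LF d f * X f e) = (\<chi> e. \<Sum>f\<in>UNIV. X f e *s ?C f)"
    by (simp add: transpose_def vec_eq_iff sum_component mult.commute)
  have "det (\<chi> d e. \<Sum>f\<in>UNIV. LF d f * X f e) = det (\<chi> e. \<Sum>f\<in>UNIV. X f e *s ?C f)"
    unfolding eq[symmetric] det_transpose ..
  also have "\<dots> = (\<Sum>\<rho>\<in>{\<rho>. \<forall>i. \<rho> i \<in> UNIV}. det (\<chi> e. X (\<rho> e) e *s ?C (\<rho> e)))"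
    using det_linear_rows_sum_gen[of "UNIV :: 'f set" "\<lambda>e f. X f e *s ?C f"] by simp
  finally have D: "det (\<chi> d e. \<Sum>f\<in>UNIV. LF d f * X f e) = (\<Sum>\<rho>\<in>{\<rho>. \<forall>i. \<rho> i \<in> UNIV}. det (\<chi> e. X (\<rho> e) e *s ?C (\<rho> e)))" .
  have "h dvd det (\<chi> e. X (\<rho> e) e *s ?C (\<rho> e))" for \<rho> :: "'e \<Rightarrow> 'f"
  proof -
    have "det (\<chi> e. X (\<rho> e) e *s ?C (\<rho> e)) = prod (\<lambda>e. X (\<rho> e) e) UNIV * det (\<chi> e. ?C (\<rho> e))"
      by (rule det_rows_mul)
    moreover have "h dvd det (\<chi> e. ?C (\<rho> e))"
    proof (cases "inj \<rho>")
      case True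
      have "(\<chi> e. ?C (\<rho> e)) = transpose (\<chi> d e. LF d (\<rho> e))"
        by (simp add: transpose_def vec_eq_iff)
      then show ?thesis using H[OF True] by (simp add: det_transpose)
    next
      case False
      then obtain i j where ij: "i \<noteq> j" "\<rho> i = \<rho> j" unfolding inj_def by blast
      have "det (\<chi> e. ?C (\<rho> e)) = 0"
        by (rule det_identical_rows[OF ij(1)]) (simp add: row_def ij(2) vec_eq_iff)
      then show ?thesis by simp
    qed
    ultimately show ?thesis by simp
  qed
  then show ?thesis unfolding D by (intro dvd_sum) 
qed
lemma perm_eqI:
  assumes "\<sigma> permutes verts" "\<sigma> 0 = \<pi> 0" "\<sigma> 1 = \<pi> 1" "\<sigma> 2 = \<pi> 2" "\<sigma> 3 = \<pi> 3"
    "\<And>n. n \<notin> verts \<Longrightarrow> \<pi> n = n"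
  shows "\<sigma> = \<pi>"
proof
  fix n show "\<sigma> n = \<pi> n"
  proof (cases "n \<in> verts")
    case True then show ?thesis using assms unfolding verts_def by auto
  next
    case False then show ?thesis using assms(1,6) by (simp add: permutes_not_in)
  qed
qed

lemma evenA:
  assumes "\<sigma> permutes verts" "\<sigma> 0 = 1" "\<sigma> 1 = 0" "\<sigma> 2 = 3" "\<sigma> 3 = 2"
  shows "evenperm \<sigma>"
proof -
  have "\<sigma> = Transposition.transpose 0 1 \<circ> Transposition.transpose 2 3"
    by (rule perm_eqI[OF assms(1)]) (auto simp: assms assms(3)[unfolded One_nat_def] verts_def Transposition.transpose_def)
  then show ?thesis by (simp add: evenperm_comp permutation_swap_id evenperm_swap)
qed

lemma evenB:
  assumes "\<sigma> permutes verts" "\<sigma> 0 = 3" "\<sigma> 1 = 2" "\<sigma> 2 = 1" "\<sigma> 3 = 0"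
  shows "evenperm \<sigma>"
proof -
  have "\<sigma> = Transposition.transpose 0 3 \<circ> Transposition.transpose 1 2"
    by (rule perm_eqI[OF assms(1)]) (auto simp: assms assms(3)[unfolded One_nat_def] verts_def Transposition.transpose_def)
  then show ?thesis by (simp add: evenperm_comp permutation_swap_id evenperm_swap)
qed

lemma face_edges_1: "face_edges 1 = {{0,2},{0,3},{2,3}}"
  unfolding face_edges_def verts_def
  apply (rule set_eqI, rule iffI)
   apply force
  apply (elim insertE; simp)
    apply (rule exI[of _ 0], rule exI[of _ 2], simp)
   apply (rule exI[of _ 0], rule exI[of _ 3], simp)
  apply (rule exI[of _ 2], rule exI[of _ 3], simp)
  done
lemma face_edges_3: "face_edges 3 = {{0,1},{0,2},{1,2}}"
  unfolding face_edges_def verts_def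
  apply (rule set_eqI, rule iffI)
   apply force
  apply (elim insertE; simp)
    apply (rule exI[of _ 0], rule exI[of _ 1], simp)
   apply (rule exI[of _ 0], rule exI[of _ 2], simp)
  apply (rule exI[of _ 1], rule exI[of _ 2], simp)
  done

lemma fe1: "face_edges 1 - {{0,2}} = {{0,3},{2,3}}"
  unfolding face_edges_def verts_def
  apply (rule set_eqI, rule iffI)
   apply force
  apply (elim insertE; simp)
   apply (rule conjI, rule exI[of _ 0], rule exI[of _ 3], simp, simp add: doubleton_eq_iff)
  apply (rule conjI, rule exI[of _ 2], rule exI[of _ 3], simp, simp add: doubleton_eq_iff)
  done
lemma fe3: "face_edges 3 - {{0,2}} = {{0,1},{1,2}}"
  unfolding face_edges_def verts_def
  apply (rule set_eqI, rule iffI)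
   apply force
  apply (elim insertE; simp)
   apply (rule conjI, rule exI[of _ 0], rule exI[of _ 1], simp, simp add: doubleton_eq_iff)
  apply (rule conjI, rule exI[of _ 1], rule exI[of _ 2], simp, simp add: doubleton_eq_iff)
  done

lemma comb0:
  fixes a b c k :: nat and v :: "nat set \<Rightarrow> bool"
  assumes "a \<in> {0,1,2,3}" "b \<in> {0,1,2,3}" "c \<in> {0,1,2,3}" "k = 1 \<or> k = 3"
    "a \<noteq> b" "a \<noteq> k" "a \<noteq> c" "b \<noteq> k" "b \<noteq> c" "k \<noteq> c"
    "\<not> (a = 1 \<and> b = 0 \<and> k = 3 \<and> c = 2)" "\<not> (a = 3 \<and> b = 2 \<and> k = 1 \<and> c = 0)"
    "v {a, b}" "\<not> v {a, c}" "v {b, c} = r"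
    "v {0,1}" "v {1,0}" "v {2,3}" "v {3,2}" "\<not> v {1,2}" "\<not> v {2,1}" "\<not> v {0,3}" "\<not> v {3,0}"
  shows "(r \<longrightarrow> {a, b} = {0,2} \<and> face_edges k - {{0,2}} = {{a, c}, {b, c}})
       \<and> (\<not> r \<longrightarrow> {a, c} = {0,2} \<and> face_edges k - {{0,2}} = {{a, b}, {b, c}})"
  using assms
  apply (elim insertE disjE emptyE)
  apply (simp_all add: fe1 fe3 fe1[simplified] fe3[simplified])
  apply (auto simp: doubleton_eq_iff)
  done
lemma comb:
  fixes \<sigma> :: "nat \<Rightarrow> nat" and v :: "nat set \<Rightarrow> bool" and r :: bool
  assumes P: "\<sigma> permutes verts" and O: "\<not> evenperm \<sigma>" and B: "\<sigma> 2 \<in> bot_faces"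
    and pos: "\<forall>a\<in>pos_sides. v a" and neg: "\<forall>a\<in>neg_sides. \<not> v a"
    and v1: "v {\<sigma> 0, \<sigma> 1}" and v2: "\<not> v {\<sigma> 0, \<sigma> 3}" and v3: "v {\<sigma> 1, \<sigma> 3} = r"
  shows "(r \<longrightarrow> {\<sigma> 0, \<sigma> 1} = bot_edge \<and> face_edges (\<sigma> 2) - {bot_edge} = {{\<sigma> 0, \<sigma> 3}, {\<sigma> 1, \<sigma> 3}})
       \<and> (\<not> r \<longrightarrow> {\<sigma> 0, \<sigma> 3} = bot_edge \<and> face_edges (\<sigma> 2) - {bot_edge} = {{\<sigma> 0, \<sigma> 1}, {\<sigma> 1, \<sigma> 3}})"
proof -
  have V: "\<sigma> i \<in> verts" if "i \<in> verts" for i using P that by (simp add: permutes_in_image)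
  have I: "\<sigma> i \<noteq> \<sigma> j" if "i \<noteq> j" for i j using permutes_inj[OF P] that by (auto dest: injD)
  have pv: "v {0,1}" "v {1,0}" "v {2,3}" "v {3,2}" using pos unfolding pos_sides_def by (auto simp: insert_commute)
  have nv: "\<not> v {1,2}" "\<not> v {2,1}" "\<not> v {0,3}" "\<not> v {3,0}" using neg unfolding neg_sides_def by (auto simp: insert_commute)
  have s0: "\<sigma> 0 \<in> {0,1,2,3}" and s1: "\<sigma> 1 \<in> {0,1,2,3}" and s3: "\<sigma> 3 \<in> {0,1,2,3}"
    using V unfolding verts_def by auto
  have s2: "\<sigma> 2 = 1 \<or> \<sigma> 2 = 3" using B unfolding bot_faces_def by auto
  have d: "\<sigma> 0 \<noteq> \<sigma> 1" "\<sigma> 0 \<noteq> \<sigma> 2" "\<sigma> 0 \<noteq> \<sigma> 3" "\<sigma> 1 \<noteq> \<sigma> 2" "\<sigma> 1 \<noteq> \<sigma> 3" "\<sigma> 2 \<noteq> \<sigma> 3"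
    by (rule I; simp)+
  have nA: "\<not> (\<sigma> 0 = 1 \<and> \<sigma> 1 = 0 \<and> \<sigma> 2 = 3 \<and> \<sigma> 3 = 2)" using evenA[OF P] O by blast
  have nB: "\<not> (\<sigma> 0 = 3 \<and> \<sigma> 1 = 2 \<and> \<sigma> 2 = 1 \<and> \<sigma> 3 = 0)" using evenB[OF P] O by blast
  show ?thesis
    unfolding bot_edge_def
    by (rule comb0[where a="\<sigma> 0" and b="\<sigma> 1" and c="\<sigma> 3" and k="\<sigma> 2"])
       (fact s0 s1 s3 s2 d nA nB v1 v2 v3 pv nv)+
qed

lemma alg0:
  fixes T S U W T' U' :: "'r::comm_ring_1"
  assumes "U' * W = U" "T' * W = T"
  shows "(if Bb then 1 else 0) - ((if Bt then T else 0) + (if Bs then S else 0) + (if Bu then U else 0))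
   = ((if Bb then 1 else 0) - ((if Bw then W else 0) + (if Bs then S else 0)))
     + ((if Bw then 1 else 0) - ((if Bu then U' else 0) + (if Bt then T' else 0))) * W"
  using assms by (cases Bb; cases Bt; cases Bs; cases Bu; cases Bw; simp add: algebra_simps)
lemma alg:
  fixes pb pt ps pu pw :: "'g::ab_group_add"
  shows "(if Bb then 1 else 0) - ((if Bt then mon (pt - pb) else 0) + (if Bs then mon (ps - pb) else 0) + (if Bu then mon (pu - pb) else 0))
   = ((if Bb then 1 else 0) - ((if Bw then mon (pw - pb) else 0) + (if Bs then mon (ps - pb) else 0)))
     + ((if Bw then 1 else 0) - ((if Bu then mon (pu - pw) else 0) + (if Bt then mon (pt - pw) else 0))) * mon (pw - pb)"
proof -
  have m: "mon a * mon b = mon (a + b)" for a b :: 'g by (simp add: mon_def mult_single)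
  have e1: "mon (pu - pw) * mon (pw - pb) = mon (pu - pb)" unfolding m by simp
  have e2: "mon (pt - pw) * mon (pw - pb) = mon (pt - pb)" unfolding m by simp
  show ?thesis by (rule alg0[OF e1 e2])
qed

lemma face_above_eq:
  assumes "inj_on (\<lambda>(T, k). tri_fc \<tau> T k) (UNIV \<times> bot_faces)" "k \<in> bot_faces"
  shows "face_above \<tau> (tri_fc \<tau> T k) = (T, k)"
  unfolding face_above_def
proof (rule the_equality)
  show "case (T, k) of (T', k') \<Rightarrow> k' \<in> bot_faces \<and> tri_fc \<tau> T' k' = tri_fc \<tau> T k" using assms by simp
  fix x assume "case x of (T', k') \<Rightarrow> k' \<in> bot_faces \<and> tri_fc \<tau> T' k' = tri_fc \<tau> T k"
  then show "x = (T, k)"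
  proof (cases x)
    case (Pair a b)
    have h: "b \<in> bot_faces" "tri_fc \<tau> a b = tri_fc \<tau> T k"
      using \<open>case x of (T', k') \<Rightarrow> k' \<in> bot_faces \<and> tri_fc \<tau> T' k' = tri_fc \<tau> T k\<close> Pair by auto
    have "(a, b) = (T, k)"
      by (rule inj_onD[OF assms(1)]) (use h assms(2) in auto)
    then show ?thesis using Pair by simp
  qed
qed



lemma column:
  fixes \<tau> :: "('t::finite, 'f::finite, 'e::finite) tri"
    and \<phi> :: "'f \<Rightarrow> 'g::ab_group_add" and p :: "'t \<Rightarrow> nat set \<Rightarrow> 'g"
  assumes V: "veering_triangulation \<tau>" and EL: "edge_lifts \<tau> \<phi> p"
  shows "\<exists>x. \<forall>d. rel_vec \<tau> p T ({top_edge} \<union> opp_sides \<tau> T) d = (\<Sum>f\<in>UNIV. LFmat \<tau> p d f * x f)"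
proof -
  define \<sigma> where "\<sigma> = tri_gl \<tau> T 2"
  define T' where "T' = tri_up \<tau> T 2"
  define ft where "ft = tri_fc \<tau> T 2"
  have k2: "(2::nat) \<in> top_faces" by (simp add: top_faces_def)
  note VD = V[unfolded veering_triangulation_def]
  have c1: "\<forall>k \<in> top_faces. tri_gl \<tau> T k permutes verts \<and> \<not> evenperm (tri_gl \<tau> T k)
          \<and> tri_gl \<tau> T k k \<in> bot_faces
          \<and> tri_fc \<tau> T k = tri_fc \<tau> (tri_up \<tau> T k) (tri_gl \<tau> T k k)"
    using VD[THEN conjunct1] by (rule spec)
  have G: "\<sigma> permutes verts" "\<not> evenperm \<sigma>" "\<sigma> 2 \<in> bot_faces" "ft = tri_fc \<tau> T' (\<sigma> 2)"
    using bspec[OF c1 k2] unfolding \<sigma>_def T'_def ft_def by auto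
  have inj: "inj_on (\<lambda>(T, k). tri_fc \<tau> T k) (UNIV \<times> bot_faces)"
    using VD[THEN conjunct2, THEN conjunct2, THEN conjunct1] by (rule bij_betw_imp_inj_on)
  have OE: "\<forall>x \<in> oedges. \<forall>y \<in> oedges.
        (case (x, y) of ((T, i, j), (T', i', j')) \<Rightarrow>
           tri_ed \<tau> T {i, j} = tri_ed \<tau> T' {i', j'} \<longleftrightarrow>
           ((T, i, j), (T', i', j')) \<in> oequiv \<tau> \<or> ((T, i, j), (T', j', i')) \<in> oequiv \<tau>)"
    using VD[THEN conjunct2, THEN conjunct2, THEN conjunct2, THEN conjunct2, THEN conjunct1] .
  have ED: "tri_ed \<tau> T' {\<sigma> i, \<sigma> j} = tri_ed \<tau> T {i, j}" if "i \<in> verts - {2}" "j \<in> verts - {2}" "i \<noteq> j" for i j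
  proof -
    have st: "((T, i, j), (T', \<sigma> i, \<sigma> j)) \<in> ostep \<tau>"
      unfolding ostep_def \<sigma>_def T'_def using that k2 by blast
    then have "((T, i, j), (T', \<sigma> i, \<sigma> j)) \<in> oequiv \<tau>" unfolding oequiv_def by blast
    moreover have "(T, i, j) \<in> oedges" using that unfolding oedges_def by auto
    moreover have "(T', \<sigma> i, \<sigma> j) \<in> oedges" using that G(1) unfolding oedges_def
      by (auto simp: permutes_in_image inj_eq[OF permutes_inj[OF G(1)]])
    ultimately show ?thesis using OE by fastforce
  qed
  have PL: "p T' {\<sigma> i, \<sigma> j} = p T {i, j} - \<phi> ft" if "i \<in> verts - {2}" "j \<in> verts - {2}" "i \<noteq> j" for i j
    using EL that k2 unfolding edge_lifts_def \<sigma>_def T'_def ft_def by (simp add: algebra_simps)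
  have vv: "(\<forall>a\<in>pos_sides. tri_veer \<tau> (tri_ed \<tau> S a)) \<and> (\<forall>a\<in>neg_sides. \<not> tri_veer \<tau> (tri_ed \<tau> S a))" for S
    using VD[THEN conjunct2, THEN conjunct2, THEN conjunct2, THEN conjunct2, THEN conjunct2, THEN conjunct2, THEN conjunct2, THEN conjunct2] by (rule spec)
  have v3: "{0::nat} \<union> {3} \<subseteq> verts - {2}" by (simp add: verts_def)
  have e01: "tri_ed \<tau> T' {\<sigma> 0, \<sigma> 1} = tri_ed \<tau> T {0, 1}" by (rule ED) (auto simp: verts_def)
  have e03: "tri_ed \<tau> T' {\<sigma> 0, \<sigma> 3} = tri_ed \<tau> T {0, 3}" by (rule ED) (auto simp: verts_def)
  have e13: "tri_ed \<tau> T' {\<sigma> 1, \<sigma> 3} = tri_ed \<tau> T {1, 3}" by (rule ED) (auto simp: verts_def)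
  have p01: "p T' {\<sigma> 0, \<sigma> 1} = p T {0, 1} - \<phi> ft" by (rule PL) (auto simp: verts_def)
  have p03: "p T' {\<sigma> 0, \<sigma> 3} = p T {0, 3} - \<phi> ft" by (rule PL) (auto simp: verts_def)
  have p13: "p T' {\<sigma> 1, \<sigma> 3} = p T {1, 3} - \<phi> ft" by (rule PL) (auto simp: verts_def)
  have w01: "tri_veer \<tau> (tri_ed \<tau> T {0, 1})" using vv[of T] by (simp add: pos_sides_def)
  have w03: "\<not> tri_veer \<tau> (tri_ed \<tau> T {0, 3})" using vv[of T] by (simp add: neg_sides_def)
  define r where "r = tri_veer \<tau> (tri_ed \<tau> T {1, 3})"
  have C: "(r \<longrightarrow> {\<sigma> 0, \<sigma> 1} = bot_edge \<and> face_edges (\<sigma> 2) - {bot_edge} = {{\<sigma> 0, \<sigma> 3}, {\<sigma> 1, \<sigma> 3}})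
       \<and> (\<not> r \<longrightarrow> {\<sigma> 0, \<sigma> 3} = bot_edge \<and> face_edges (\<sigma> 2) - {bot_edge} = {{\<sigma> 0, \<sigma> 1}, {\<sigma> 1, \<sigma> 3}})"
    apply (rule comb[OF G(1-3) conjunct1[OF vv[of T']] conjunct2[OF vv[of T']]])
      apply (unfold e01, rule w01)
     apply (unfold e03, rule w03)
    apply (unfold e13 r_def, rule refl)
    done
  have dist: "\<sigma> 0 \<noteq> \<sigma> 1" "\<sigma> 0 \<noteq> \<sigma> 3" "\<sigma> 1 \<noteq> \<sigma> 3"
    using permutes_inj[OF G(1)] by (simp_all add: inj_eq)
  have fa: "face_above \<tau> ft = (T', \<sigma> 2)" using face_above_eq[OF inj G(3)] G(4) by simp
  have LFt: "LFmat \<tau> p d ft = rel_vec \<tau> p T' (face_edges (\<sigma> 2) - {bot_edge}) d" for d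
    by (simp add: LFmat_def fa)
  have LFb: "LFmat \<tau> p d (tri_fc \<tau> T k) = rel_vec \<tau> p T (face_edges k - {bot_edge}) d" if "k \<in> bot_faces" for d k
    by (simp add: LFmat_def face_above_eq[OF inj that])
  have sumx: "(\<Sum>f\<in>UNIV. LFmat \<tau> p d f * ((if f = a then 1 else 0) + (if f = ft then c else 0)))
      = LFmat \<tau> p d a + LFmat \<tau> p d ft * c" for d a c
    by (simp add: distrib_left sum.distrib if_distrib[of "\<lambda>x. LFmat \<tau> p d _ * x"] cong: if_cong)
  show ?thesis
  proof (cases r)
    case True
    have bt: "bot_edge = {\<sigma> 0, \<sigma> 1}" and fe: "face_edges (\<sigma> 2) - {bot_edge} = {{\<sigma> 0, \<sigma> 3}, {\<sigma> 1, \<sigma> 3}}"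
      using C True by auto
    have os: "opp_sides \<tau> T = neg_sides" using True r_def by (simp add: opp_sides_def top_edge_def)
    let ?c = "mon (p T {0,1} - p T {0,2})"
    show ?thesis
    proof (rule exI[of _ "\<lambda>f. (if f = tri_fc \<tau> T 3 then 1 else 0) + (if f = ft then ?c else 0)"], rule allI)
      fix d
      have b3: "(3::nat) \<in> bot_faces" by (simp add: bot_faces_def)
      have R1: "LFmat \<tau> p d ft = (if tri_ed \<tau> T {0,1} = d then 1 else 0)
          - ((if tri_ed \<tau> T {0,3} = d then mon (p T {0,3} - p T {0,1}) else 0)
           + (if tri_ed \<tau> T {1,3} = d then mon (p T {1,3} - p T {0,1}) else 0))"
        unfolding LFt fe rel_vec_def using dist
        by (simp add: bt e01 e03 e13 p01 p03 p13 e01[simplified] e13[simplified] p01[simplified] p13[simplified] doubleton_eq_iff)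
      have R2: "LFmat \<tau> p d (tri_fc \<tau> T 3) = (if tri_ed \<tau> T {0,2} = d then 1 else 0)
          - ((if tri_ed \<tau> T {0,1} = d then mon (p T {0,1} - p T {0,2}) else 0)
           + (if tri_ed \<tau> T {1,2} = d then mon (p T {1,2} - p T {0,2}) else 0))"
        unfolding LFb[OF b3] rel_vec_def
        by (simp add: face_edges_3 bot_edge_def doubleton_eq_iff insert_Diff_if)
      have R3: "rel_vec \<tau> p T ({top_edge} \<union> opp_sides \<tau> T) d = (if tri_ed \<tau> T {0,2} = d then 1 else 0)
          - ((if tri_ed \<tau> T {1,3} = d then mon (p T {1,3} - p T {0,2}) else 0)
           + (if tri_ed \<tau> T {1,2} = d then mon (p T {1,2} - p T {0,2}) else 0)
           + (if tri_ed \<tau> T {0,3} = d then mon (p T {0,3} - p T {0,2}) else 0))"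
        unfolding os rel_vec_def
        by (simp add: neg_sides_def top_edge_def bot_edge_def doubleton_eq_iff add.assoc)
      show "rel_vec \<tau> p T ({top_edge} \<union> opp_sides \<tau> T) d = (\<Sum>f\<in>UNIV. LFmat \<tau> p d f * ((if f = tri_fc \<tau> T 3 then 1 else 0) + (if f = ft then ?c else 0)))"
        unfolding sumx R1 R2 R3 by (rule alg)
    qed
  next
    case False
    have bt: "bot_edge = {\<sigma> 0, \<sigma> 3}" and fe: "face_edges (\<sigma> 2) - {bot_edge} = {{\<sigma> 0, \<sigma> 1}, {\<sigma> 1, \<sigma> 3}}"
      using C False by auto
    have os: "opp_sides \<tau> T = pos_sides" using False r_def by (simp add: opp_sides_def top_edge_def)
    let ?c = "mon (p T {0,3} - p T {0,2})"
    show ?thesis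
    proof (rule exI[of _ "\<lambda>f. (if f = tri_fc \<tau> T 1 then 1 else 0) + (if f = ft then ?c else 0)"], rule allI)
      fix d
      have b1: "(1::nat) \<in> bot_faces" by (simp add: bot_faces_def)
      have R1: "LFmat \<tau> p d ft = (if tri_ed \<tau> T {0,3} = d then 1 else 0)
          - ((if tri_ed \<tau> T {0,1} = d then mon (p T {0,1} - p T {0,3}) else 0)
           + (if tri_ed \<tau> T {1,3} = d then mon (p T {1,3} - p T {0,3}) else 0))"
        unfolding LFt fe rel_vec_def using dist
        by (simp add: bt e01 e03 e13 p01 p03 p13 e01[simplified] e13[simplified] p01[simplified] p13[simplified] doubleton_eq_iff)
      have R2: "LFmat \<tau> p d (tri_fc \<tau> T 1) = (if tri_ed \<tau> T {0,2} = d then 1 else 0)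
          - ((if tri_ed \<tau> T {0,3} = d then mon (p T {0,3} - p T {0,2}) else 0)
           + (if tri_ed \<tau> T {2,3} = d then mon (p T {2,3} - p T {0,2}) else 0))"
        unfolding LFb[OF b1] rel_vec_def bot_edge_def fe1
        by (simp add: doubleton_eq_iff)
      have R3: "rel_vec \<tau> p T ({top_edge} \<union> opp_sides \<tau> T) d = (if tri_ed \<tau> T {0,2} = d then 1 else 0)
          - ((if tri_ed \<tau> T {1,3} = d then mon (p T {1,3} - p T {0,2}) else 0)
           + (if tri_ed \<tau> T {2,3} = d then mon (p T {2,3} - p T {0,2}) else 0)
           + (if tri_ed \<tau> T {0,1} = d then mon (p T {0,1} - p T {0,2}) else 0))"
        unfolding os rel_vec_def
        by (simp add: pos_sides_def top_edge_def bot_edge_def doubleton_eq_iff add.assoc)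
      show "rel_vec \<tau> p T ({top_edge} \<union> opp_sides \<tau> T) d = (\<Sum>f\<in>UNIV. LFmat \<tau> p d f * ((if f = tri_fc \<tau> T 1 then 1 else 0) + (if f = ft then ?c else 0)))"
        unfolding sumx R1 R2 R3 by (rule alg)
    qed
  qed
qed

theorem mainTheorem3:
  fixes \<tau> :: "('t::finite, 'f::finite, 'e::finite) tri"
    and \<phi> :: "'f \<Rightarrow> 'g::ab_group_add"
    and p :: "'t \<Rightarrow> nat set \<Rightarrow> 'g"
    and \<Theta> :: "'g zgroupring"
  assumes "veering_triangulation \<tau>"
    and "univ_free_abelian_cover \<tau> \<phi>"
    and "edge_lifts \<tau> \<phi> p"
    and "is_gcd_of \<Theta> (face_minors \<tau> p)"
  shows "col_module (Lmat \<tau> p) \<subseteq> col_module (LFmat \<tau> p) \<and> \<Theta> dvd veering_poly \<tau> p"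
proof -
  have col: "\<forall>e. \<exists>x. \<forall>d. Lmat \<tau> p d e = (\<Sum>f\<in>UNIV. LFmat \<tau> p d f * x f)"
    using column[OF assms(1,3)] unfolding Lmat_def by blast
  obtain X where X: "\<And>e d. Lmat \<tau> p d e = (\<Sum>f\<in>UNIV. LFmat \<tau> p d f * X e f)"
    using choice[OF col] by blast
  have P1: "col_module (Lmat \<tau> p) \<subseteq> col_module (LFmat \<tau> p)"
  proof
    fix v assume "v \<in> col_module (Lmat \<tau> p)"
    then obtain y where y: "v = (\<lambda>d. \<Sum>e\<in>UNIV. Lmat \<tau> p d e * y e)"
      unfolding col_module_def by blast
    have V: "v = (\<lambda>d. \<Sum>f\<in>UNIV. LFmat \<tau> p d f * (\<Sum>e\<in>UNIV. X e f * y e))"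
      unfolding y X by (simp add: sum_distrib_left sum_distrib_right mult.assoc sum.swap[of _ "UNIV :: 'e set"])
    show "v \<in> col_module (LFmat \<tau> p)" unfolding col_module_def mem_Collect_eq
      by (rule exI[where x="\<lambda>f. \<Sum>e\<in>UNIV. X e f * y e"]) (rule V)
  qed
  have "\<Theta> dvd det (\<chi> d e. \<Sum>f\<in>UNIV. LFmat \<tau> p d f * (\<lambda>f e. X e f) f e)"
  proof (rule det_part)
    fix \<sigma> :: "'e \<Rightarrow> 'f" assume "inj \<sigma>"
    then have "det (\<chi> d e. LFmat \<tau> p d (\<sigma> e)) \<in> face_minors \<tau> p"
      unfolding face_minors_def by blast
    then show "\<Theta> dvd det (\<chi> d e. LFmat \<tau> p d (\<sigma> e))"
      using assms(4) unfolding is_gcd_of_def by blast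
  qed
  then have P2: "\<Theta> dvd veering_poly \<tau> p"
    unfolding veering_poly_def X by simp
  show ?thesis using P1 P2 by blast
qed

end
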